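(* Let $1\le r^{\star}\le r<n$, let $u_{0},u_{1},\dots,u_{n-1}$ be an orthonormal basis of $\mathbb{R}^{n}$, let $q=r-r^{\star}+1$ and $\kappa=1+2\sqrt{q}$. Let $\mathbf{H}$ be a real symmetric $n^{2}\times n^{2}$ matrix with $I\preceq\mathbf{H}\preceq\kappa I$ satisfying $$\mathbf{H}\,\mathrm{vec}\Big(\sqrt{q}u_{0}u_{0}^{T}+\sum_{i=1}^{q}u_{i}u_{i}^{T}\Big)=\kappa\,\mathrm{vec}\Big(\sqrt{q}u_{0}u_{0}^{T}+\sum_{i=1}^{q}u_{i}u_{i}^{T}\Big),$$ $$\mathbf{H}\,\mathrm{vec}\Big(\sqrt{q}u_{0}u_{0}^{T}-\sum_{i=1}^{q}u_{i}u_{i}^{T}\Big)=\mathrm{vec}\Big(\sqrt{q}u_{0}u_{0}^{T}-\sum_{i=1}^{q}u_{i}u_{i}^{T}\Big),$$ $$\mathbf{H}\,\mathrm{vec}(u_{0}u_{i}^{T}+u_{i}u_{0}^{T})=\kappa\,\mathrm{vec}(u_{0}u_{i}^{T}+u_{i}u_{0}^{T})\quad\text{for all }i\in\{1,\dots,r\}.$$ Let $\xi=\sqrt{1+\sqrt{q}}$, $\delta=1/(1+1/\sqrt{q})$, $Z=\xi\,[u_{0},u_{q+1},u_{q+2},\dots,u_{r}]\in\mathbb{R}^{n\times r^{\star}}$ and $X=[u_{1},\dots,u_{q},\xi u_{q+1},\dots,\xi u_{r}]\in\mathbb{R}^{n\times r}$. Then $(\delta,(1-\delta)\mathbf{H})$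 is a feasible point of the problem defining $\delta_{\mathrm{ub}}(X,Z)$; that is, $\mathbf{H}'=(1-\delta)\mathbf{H}$ satisfies $\mathbf{J}^{T}\mathbf{H}'\mathbf{e}=0$, $2I_{r}\otimes\mathrm{mat}(\mathbf{H}'\mathbf{e})+\mathbf{J}^{T}\mathbf{H}'\mathbf{J}\succeq0$, and $(1-\delta)I\preceq\mathbf{H}'\preceq(1+\delta)I$.
   Context: $\mathrm{vec}$ is column-stacking vectorization and $\mathrm{mat}$ its inverse; $\otimes$ is the Kronecker product with $\mathrm{vec}(AXB^{T})=(B\otimes A)\mathrm{vec}(X)$. For $X\in\mathbb{R}^{n\times r}$, $Z\in\mathbb{R}^{n\times r^{\star}}$: $\mathbf{e}=\mathrm{vec}(XX^{T}-ZZ^{T})$ and $\mathbf{J}\in\mathbb{R}^{n^{2}\times nr}$ satisfies $\mathbf{J}\,\mathrm{vec}(Y)=\mathrm{vec}(XY^{T}+YX^{T})$ for all $Y\in\mathbb{R}^{n\times r}$. $\delta_{\mathrm{ub}}(X,Z)$ is the minimum of $\delta$ over pairs $(\delta,\mathbf{H}')$ with $\mathbf{H}'$ real symmetric $n^{2}\times n^{2}$ satisfying $\mathbf{J}^{T}\mathbf{H}'\mathbf{e}=0$, $2I_{r}\otimes\mathrm{mat}(\mathbf{H}'\mathbf{e})+\mathbf{J}^{T}\mathbf{H}'\mathbf{J}\succeq0$, and $(1-\delta)I\preceq\mathbf{H}'\preceq(1+\delta)I$. *)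

theory Defs
  imports Complex_Main "Jordan_Normal_Form.Matrix"
begin

text \<open>Column-stacking vectorization: entry (i,j) of an m x k matrix goes to index i + j*m.\<close>
definition vecm :: "real mat \<Rightarrow> real vec" where
  "vecm A = vec (dim_row A * dim_col A) (\<lambda>t. A $$ (t mod dim_row A, t div dim_row A))"

definition matv :: "nat \<Rightarrow> nat \<Rightarrow> real vec \<Rightarrow> real mat" where
  "matv m k v = mat m k (\<lambda>(i,j). v $ (i + j * m))"

definition kron :: "real mat \<Rightarrow> real mat \<Rightarrow> real mat" where
  "kron A B = mat (dim_row A * dim_row B) (dim_col A * dim_col B)
     (\<lambda>(i,j). A $$ (i div dim_row B, j div dim_col B) * B $$ (i mod dim_row B, j mod dim_col B))"

definition psd :: "real mat \<Rightarrow> bool" where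
  "psd A \<longleftrightarrow> A \<in> carrier_mat (dim_row A) (dim_row A) \<and>
     (\<forall>x \<in> carrier_vec (dim_row A). 0 \<le> x \<bullet> (A *\<^sub>v x))"

definition loewner_le :: "real mat \<Rightarrow> real mat \<Rightarrow> bool" where
  "loewner_le A B \<longleftrightarrow> psd (B - A)"

end

theory Submission
  imports Defs
begin


lemma sum_mod_div:
  fixes g :: "nat \<Rightarrow> nat \<Rightarrow> real"
  shows "(\<Sum>t<m*k. g (t mod m) (t div m)) = (\<Sum>i<m. \<Sum>j<k. g i j)"
proof (induction k)
  case 0 then show ?case by simp
next
  case (Suc k)
  have split: "{..<m*Suc k} = {..<m*k} \<union> {m*k..<m*k+m}" by auto
  have "(\<Sum>t<m*Suc k. g (t mod m) (t div m)) = (\<Sum>t<m*k. g (t mod m) (t div m)) + (\<Sum>t\<in>{m*k..<m*k+m}. g (t mod m) (t div m))"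
    unfolding split by (subst sum.union_disjoint) auto
  also have "(\<Sum>t\<in>{m*k..<m*k+m}. g (t mod m) (t div m)) = (\<Sum>i\<in>{0..<m}. g ((i + m*k) mod m) ((i+m*k) div m))"
    using sum.shift_bounds_nat_ivl[of "\<lambda>t. g (t mod m) (t div m)" 0 "m*k" m] by (simp add: add.commute)
  also have "\<dots> = (\<Sum>i<m. g i k)"
    by (rule sum.cong) auto
  finally show ?case using Suc by (simp add: sum.distrib)
qed

lemma vecm_mat: "vecm (mat m k f) = vec (m*k) (\<lambda>t. f (t mod m, t div m))"
proof -
  have "t < m*k \<Longrightarrow> t div m < k" for t by (simp add: less_mult_imp_div_less mult.commute)
  moreover have "t < m*k \<Longrightarrow> t mod m < m" for t by (cases "m = 0") auto
  ultimately show ?thesis unfolding vecm_def by (intro eq_vecI) auto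
qed

lemma dim_vecm[simp]: "dim_vec (vecm A) = dim_row A * dim_col A"
  unfolding vecm_def by simp

lemma vecm_carrier[simp]: "A \<in> carrier_mat m k \<Longrightarrow> vecm A \<in> carrier_vec (m*k)"
  unfolding vecm_def carrier_mat_def by auto

lemma frob:
  assumes "A \<in> carrier_mat m k" "B \<in> carrier_mat m k"
  shows "vecm A \<bullet> vecm B = (\<Sum>i<m. \<Sum>j<k. A $$ (i,j) * B $$ (i,j))"
proof -
  have "vecm A \<bullet> vecm B = (\<Sum>t<m*k. A $$ (t mod m, t div m) * B $$ (t mod m, t div m))"
    using assms unfolding scalar_prod_def vecm_def
    by (auto simp: lessThan_atLeast0 intro!: sum.cong)
  also have "\<dots> = (\<Sum>i<m. \<Sum>j<k. A $$ (i,j) * B $$ (i,j))"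
    by (rule sum_mod_div)
  finally show ?thesis .
qed

lemma idx_lt: "i < (m::nat) \<Longrightarrow> j < k \<Longrightarrow> i + j*m < m*k"
proof -
  assume a: "i < m" "j < k"
  have "i + j*m < m + j*m" using a by simp
  also have "\<dots> = Suc j * m" by simp
  also have "\<dots> \<le> k * m" using a by (intro mult_le_mono1) simp
  finally show ?thesis by (simp add: mult.commute)
qed

lemma matv_vecm: "A \<in> carrier_mat m k \<Longrightarrow> matv m k (vecm A) = A"
  unfolding matv_def vecm_def
  by (intro eq_matI) (auto simp: idx_lt)

lemma vecm_matv: assumes v: "v \<in> carrier_vec (m*k)" shows "vecm (matv m k v) = v"
proof -
  have "\<And>t. t < m*k \<Longrightarrow> t div m < k \<and> t mod m < m"
    by (metis less_mult_imp_div_less mod_less_divisor mult.commute mult_is_0 neq0_conv not_less0)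
  then show ?thesis using v unfolding vecm_def matv_def
    by (intro eq_vecI) (auto simp: mult.commute)
qed

lemma matv_carrier[simp]: "matv m k v \<in> carrier_mat m k"
  unfolding matv_def by simp


lemma sumXZ:
  fixes f g :: "nat \<Rightarrow> real"
  assumes qrs: "q + rs = r + 1" and rs1: "1 \<le> rs"
  shows "(\<Sum>ia=0..<r. (if ia<q then 1 else \<xi>) * f (Suc ia) * ((if ia<q then 1 else \<xi>) * g (Suc ia)))
    - (\<Sum>ia=0..<rs. \<xi> * (if ia=0 then f 0 else f (q+ia)) * (\<xi> * (if ia = 0 then g 0 else g (q+ia))))
    = (\<Sum>k=Suc 0..q. f k * g k) - \<xi>^2 * (f 0 * g 0)"
proof -
  define F where "F k = \<xi>^2 * (f k * g k)" for k
  have qr: "q \<le> r" using qrs rs1 by simp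
  have 1: "(\<Sum>ia=0..<r. (if ia<q then 1 else \<xi>) * f (Suc ia) * ((if ia<q then 1 else \<xi>) * g (Suc ia)))
     = (\<Sum>ia=0..<q. f (Suc ia) * g (Suc ia)) + (\<Sum>ia=q..<r. F (Suc ia))"
  proof -
    have "(\<Sum>ia=0..<r. (if ia<q then 1 else \<xi>) * f (Suc ia) * ((if ia<q then 1 else \<xi>) * g (Suc ia)))
      = (\<Sum>ia=0..<q. (if ia<q then 1 else \<xi>) * f (Suc ia) * ((if ia<q then 1 else \<xi>) * g (Suc ia)))
       + (\<Sum>ia=q..<r. (if ia<q then 1 else \<xi>) * f (Suc ia) * ((if ia<q then 1 else \<xi>) * g (Suc ia)))"
      by (rule sum.atLeastLessThan_concat[symmetric]) (use qr in auto)
    also have "\<dots> = (\<Sum>ia=0..<q. f (Suc ia) * g (Suc ia)) + (\<Sum>ia=q..<r. F (Suc ia))"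
      unfolding F_def by (intro arg_cong2[where f="(+)"] sum.cong) (auto simp: power2_eq_square)
    finally show ?thesis .
  qed
  have 2: "(\<Sum>ia=0..<q. f (Suc ia) * g (Suc ia)) = (\<Sum>k=Suc 0..q. f k * g k)"
    using sum.shift_bounds_Suc_ivl[of "\<lambda>k. f k * g k" 0 q]
    by (simp add: atLeastLessThanSuc_atLeastAtMost)
  have 3: "(\<Sum>ia=0..<rs. \<xi> * (if ia=0 then f 0 else f (q+ia)) * (\<xi> * (if ia = 0 then g 0 else g (q+ia))))
     = F 0 + (\<Sum>ia=Suc 0..<rs. F (ia + q))"
    using rs1 unfolding F_def
    by (subst sum.atLeast_Suc_lessThan) (auto simp: power2_eq_square add.commute intro!: sum.cong)
  have 4: "(\<Sum>ia=Suc 0..<rs. F (ia + q)) = (\<Sum>ia=q..<r. F (Suc ia))"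
  proof -
    have "(\<Sum>ia=Suc 0..<rs. F (ia + q)) = sum F {Suc 0 + q..<rs + q}"
      by (rule sum.shift_bounds_nat_ivl[symmetric])
    also have "\<dots> = sum F {Suc q..<Suc r}" using qrs by (simp add: add.commute)
    also have "\<dots> = (\<Sum>ia=q..<r. F (Suc ia))" by (rule sum.shift_bounds_Suc_ivl)
    finally show ?thesis .
  qed
  show ?thesis unfolding 1 2 3 4 by (simp add: F_def)
qed
lemma self_sp_nonneg: "(0::real) \<le> v \<bullet> v"
  unfolding scalar_prod_def by (intro sum_nonneg) auto

lemma self_sp_zero: assumes v: "(v::real vec) \<in> carrier_vec N" and z: "v \<bullet> v = 0" shows "v = 0\<^sub>v N"
proof (intro eq_vecI)
  fix i assume i: "i < dim_vec (0\<^sub>v N :: real vec)"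
  have "(\<Sum>i\<in>{0..<dim_vec v}. v $ i * v $ i) = 0" using z unfolding scalar_prod_def by simp
  then have "\<forall>i\<in>{0..<dim_vec v}. v $ i * v $ i = 0" by (subst (asm) sum_nonneg_eq_0_iff) auto
  then show "v $ i = 0\<^sub>v N $ i" using i v by auto
qed (use v in auto)

lemma smult_mat_vec: "A \<in> carrier_mat a b \<Longrightarrow> v \<in> carrier_vec b \<Longrightarrow> ((c::real) \<cdot>\<^sub>m A) *\<^sub>v v = c \<cdot>\<^sub>v (A *\<^sub>v v)"
  by (intro eq_vecI) (auto simp: scalar_prod_def sum_distrib_left mult.assoc)

lemma keyineq:
  fixes H :: "real mat"
  assumes H: "H \<in> carrier_mat N N" and sym: "transpose_mat H = H"
    and low: "loewner_le (1\<^sub>m N) H"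
    and s: "s \<in> carrier_vec N" and p: "p \<in> carrier_vec N"
    and eig: "H *\<^sub>v p = \<kappa> \<cdot>\<^sub>v p"
  shows "2 * \<kappa> * (s \<bullet> p) - \<kappa> * (p \<bullet> p) \<le> s \<bullet> (H *\<^sub>v s)"
proof -
  define d where "d = s - p"
  have d: "d \<in> carrier_vec N" using s p d_def by simp
  have "psd (H - 1\<^sub>m N)" using low unfolding loewner_le_def .
  then have "0 \<le> d \<bullet> ((H - 1\<^sub>m N) *\<^sub>v d)" using d H unfolding psd_def by simp
  also have "(H - 1\<^sub>m N) *\<^sub>v d = H *\<^sub>v d - d"
    using H d by (simp add: minus_mult_distrib_mat_vec)
  also have "d \<bullet> (H *\<^sub>v d - d) = d \<bullet> (H *\<^sub>v d) - d \<bullet> d"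
    using H d by (simp add: scalar_prod_minus_distrib[of _ N])
  finally have 1: "d \<bullet> d \<le> d \<bullet> (H *\<^sub>v d)" by simp
  have 2: "0 \<le> d \<bullet> d" by (rule self_sp_nonneg)
  have Hs: "H *\<^sub>v s \<in> carrier_vec N" using H s by simp
  have Hp: "H *\<^sub>v p \<in> carrier_vec N" using H p by simp
  have ps: "p \<bullet> (H *\<^sub>v s) = \<kappa> * (s \<bullet> p)"
  proof -
    have "p \<bullet> (H *\<^sub>v s) = (transpose_mat H *\<^sub>v p) \<bullet> s"
      using transpose_vec_mult_scalar[OF H s p] by simp
    also have "\<dots> = \<kappa> * (p \<bullet> s)" using sym eig p s by simp
    also have "\<dots> = \<kappa> * (s \<bullet> p)" using comm_scalar_prod[OF p s] by simp
    finally show ?thesis .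
  qed
  have "d \<bullet> (H *\<^sub>v d) = s \<bullet> (H *\<^sub>v s) - s \<bullet> (H *\<^sub>v p) - (p \<bullet> (H *\<^sub>v s) - p \<bullet> (H *\<^sub>v p))"
    unfolding d_def using H s p Hs Hp
    by (simp add: mult_minus_distrib_mat_vec minus_scalar_prod_distrib[of _ N] scalar_prod_minus_distrib[of _ N])
  also have "\<dots> = s \<bullet> (H *\<^sub>v s) - 2 * \<kappa> * (s \<bullet> p) + \<kappa> * (p \<bullet> p)"
    unfolding ps eig using s p by simp
  finally show ?thesis using 1 2 by linarith
qed

lemma bil0:
  fixes a b :: "real vec"
  assumes a: "a \<in> carrier_vec n" and b: "b \<in> carrier_vec n" and S: "S \<in> carrier_mat n n"
  shows "(\<Sum>i<n. \<Sum>j<n. a $ i * b $ j * S $$ (i,j)) = a \<bullet> (S *\<^sub>v b)"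
  using a b S unfolding scalar_prod_def
  by (auto simp: scalar_prod_def lessThan_atLeast0 sum_distrib_left intro!: sum.cong)

lemma bil:
  fixes a b :: "real vec"
  assumes a: "a \<in> carrier_vec n" and b: "b \<in> carrier_vec n" and S: "S \<in> carrier_mat n n"
  shows "vecm (mat n n (\<lambda>(i,j). a $ i * b $ j + b $ i * a $ j)) \<bullet> vecm S = a \<bullet> (S *\<^sub>v b) + b \<bullet> (S *\<^sub>v a)"
proof -
  have "vecm (mat n n (\<lambda>(i,j). a $ i * b $ j + b $ i * a $ j)) \<bullet> vecm S
     = (\<Sum>i<n. \<Sum>j<n. (a $ i * b $ j + b $ i * a $ j) * S $$ (i,j))"
    using S by (subst frob[of _ n n]) auto
  also have "\<dots> = (\<Sum>i<n. \<Sum>j<n. a $ i * b $ j * S $$ (i,j)) + (\<Sum>i<n. \<Sum>j<n. b $ i * a $ j * S $$ (i,j))"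
    by (simp add: distrib_right sum.distrib)
  finally show ?thesis using bil0[OF a b S] bil0[OF b a S] by simp
qed

lemma bil1:
  fixes a :: "real vec"
  assumes a: "a \<in> carrier_vec n" and S: "S \<in> carrier_mat n n"
  shows "vecm (mat n n (\<lambda>(i,j). a $ i * a $ j)) \<bullet> vecm S = a \<bullet> (S *\<^sub>v a)"
proof -
  have "vecm (mat n n (\<lambda>(i,j). a $ i * a $ j)) \<bullet> vecm S
     = (\<Sum>i<n. \<Sum>j<n. a $ i * a $ j * S $$ (i,j))"
    using S by (subst frob[of _ n n]) auto
  then show ?thesis using bil0[OF a a S] by simp
qed

lemma pnorm:
  fixes a b :: "real vec"
  assumes a: "a \<in> carrier_vec n" and b: "b \<in> carrier_vec n"
  shows "vecm (mat n n (\<lambda>(i,j). a $ i * b $ j + b $ i * a $ j)) \<bullet> vecm (mat n n (\<lambda>(i,j). a $ i * b $ j + b $ i * a $ j))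
     = 2 * (a \<bullet> a) * (b \<bullet> b) + 2 * (a \<bullet> b)^2"
proof -
  have "vecm (mat n n (\<lambda>(i,j). a $ i * b $ j + b $ i * a $ j)) \<bullet> vecm (mat n n (\<lambda>(i,j). a $ i * b $ j + b $ i * a $ j))
     = (\<Sum>i<n. \<Sum>j<n. (a $ i * b $ j + b $ i * a $ j) * (a $ i * b $ j + b $ i * a $ j))"
    by (subst frob[of _ n n]) auto
  also have "\<dots> = (\<Sum>i<n. \<Sum>j<n. (a$i*a$i) * (b$j*b$j) + (b$i*b$i)*(a$j*a$j) + 2 * ((a$i*b$i)*(a$j*b$j)))"
    by (intro sum.cong refl) (simp add: algebra_simps)
  also have "\<dots> = (\<Sum>i<n. \<Sum>j<n. (a$i*a$i) * (b$j*b$j)) + (\<Sum>i<n. \<Sum>j<n. (b$i*b$i)*(a$j*a$j)) + 2 * (\<Sum>i<n. \<Sum>j<n. (a$i*b$i)*(a$j*b$j))"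
    by (simp only: sum.distrib sum_distrib_left)
  also have "\<dots> = (\<Sum>i<n. a$i*a$i) * (\<Sum>j<n. b$j*b$j) + (\<Sum>i<n. b$i*b$i) * (\<Sum>j<n. a$j*a$j) + 2 * ((\<Sum>i<n. a$i*b$i) * (\<Sum>j<n. a$j*b$j))"
    by (simp only: sum_product)
  also have "\<dots> = 2 * (\<Sum>i<n. a$i*a$i) * (\<Sum>j<n. b$j*b$j) + 2 * (\<Sum>i<n. a$i*b$i)^2"
    by (simp add: power2_eq_square algebra_simps)
  finally show ?thesis using a b unfolding scalar_prod_def by (simp add: lessThan_atLeast0)
qed

lemma sum_mod_div': 
  fixes g :: "nat \<Rightarrow> nat \<Rightarrow> real"
  shows "(\<Sum>t\<in>{0..<m*k}. g (t mod m) (t div m)) = (\<Sum>i<m. \<Sum>j<k. g i j)"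
  using sum_mod_div[of g m k] by (simp add: lessThan_atLeast0)

lemma kron_quad:
  fixes a x :: "real vec" and \<gamma> :: real
  assumes a: "a \<in> carrier_vec n" and x: "x \<in> carrier_vec (n*r)"
  shows "x \<bullet> (kron (2 \<cdot>\<^sub>m 1\<^sub>m r) (mat n n (\<lambda>(i,j). \<gamma> * (a$i * a$j))) *\<^sub>v x)
     = 2 * \<gamma> * (\<Sum>c<r. (\<Sum>i<n. a$i * x$(i + c*n))^2)"
proof -
  define K where "K = kron (2 \<cdot>\<^sub>m 1\<^sub>m r) (mat n n (\<lambda>(i,j). \<gamma> * (a$i * a$j)))"
  define w where "w c = (\<Sum>i<n. a$i * x$(i + c*n))" for c
  have dK: "dim_row K = n*r" "dim_col K = n*r" unfolding K_def kron_def by auto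
  have n0: "t < n*r \<Longrightarrow> 0 < n" for t by (cases n) auto
  have md: "t < n*r \<Longrightarrow> t mod n < n \<and> t div n < r" for t
    by (metis less_mult_imp_div_less mod_less_divisor mult.commute n0)
  have Kx: "(K *\<^sub>v x) $ t = 2 * \<gamma> * a$(t mod n) * w (t div n)" if t: "t < n*r" for t
  proof -
    have "(K *\<^sub>v x) $ t = (\<Sum>s\<in>{0..<n*r}. K $$ (t,s) * x $ s)"
      using t dK x by (simp add: scalar_prod_def)
    also have "\<dots> = (\<Sum>s\<in>{0..<n*r}. (\<lambda>i c. (if t div n = c then 2 else 0) * (\<gamma> * (a$(t mod n) * a$i)) * x$(i + c*n)) (s mod n) (s div n))"
      using md t unfolding K_def kron_def by (intro sum.cong refl) (auto simp: mult.commute)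
    also have "\<dots> = (\<Sum>i<n. \<Sum>c<r. (if t div n = c then 2 else 0) * (\<gamma> * (a$(t mod n) * a$i)) * x$(i + c*n))"
      by (rule sum_mod_div')
    also have "\<dots> = (\<Sum>i<n. 2 * (\<gamma> * (a$(t mod n) * a$i)) * x$(i + (t div n)*n))"
      using md[OF t] by (intro sum.cong refl) (simp add: if_distrib if_distribR sum.If_cases)
    also have "\<dots> = 2 * \<gamma> * a$(t mod n) * w (t div n)"
      unfolding w_def by (simp add: sum_distrib_left algebra_simps)
    finally show ?thesis .
  qed
  have "x \<bullet> (K *\<^sub>v x) = (\<Sum>t\<in>{0..<n*r}. (\<lambda>i c. x$(i + c*n) * (2 * \<gamma> * a$i * w c)) (t mod n) (t div n))"
    unfolding scalar_prod_def using x dK Kx md by (intro sum.cong) (auto simp: mult.commute)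
  also have "\<dots> = (\<Sum>i<n. \<Sum>c<r. x$(i + c*n) * (2 * \<gamma> * a$i * w c))" by (rule sum_mod_div')
  also have "\<dots> = (\<Sum>c<r. \<Sum>i<n. x$(i + c*n) * (2 * \<gamma> * a$i * w c))" by (rule sum.swap)
  also have "\<dots> = (\<Sum>c<r. 2 * \<gamma> * w c * w c)"
    unfolding w_def by (intro sum.cong refl) (simp add: sum_distrib_left sum_distrib_right algebra_simps)
  also have "\<dots> = 2 * \<gamma> * (\<Sum>c<r. (w c)^2)" by (simp add: sum_distrib_left power2_eq_square algebra_simps)
  finally show ?thesis unfolding K_def w_def .
qed

lemma eig_sum:
  fixes H :: "real mat" and u :: "nat \<Rightarrow> real vec" and \<beta> :: "nat \<Rightarrow> real"
  assumes H: "H \<in> carrier_mat (n*n) (n*n)"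
    and eig: "\<And>k. 1 \<le> k \<Longrightarrow> k \<le> r \<Longrightarrow>
               H *\<^sub>v vecm (mat n n (\<lambda>(i,j). u 0 $ i * u k $ j + u k $ i * u 0 $ j))
               = \<kappa> \<cdot>\<^sub>v vecm (mat n n (\<lambda>(i,j). u 0 $ i * u k $ j + u k $ i * u 0 $ j))"
  shows "m \<le> r \<Longrightarrow> H *\<^sub>v vecm (mat n n (\<lambda>(i,j). u 0 $ i * (\<Sum>k=1..m. \<beta> k * u k $ j) + (\<Sum>k=1..m. \<beta> k * u k $ i) * u 0 $ j))
     = \<kappa> \<cdot>\<^sub>v vecm (mat n n (\<lambda>(i,j). u 0 $ i * (\<Sum>k=1..m. \<beta> k * u k $ j) + (\<Sum>k=1..m. \<beta> k * u k $ i) * u 0 $ j))"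
proof (induction m)
  case 0
  have "vecm (mat n n (\<lambda>a. 0)) = 0\<^sub>v (n*n)"
    by (simp add: vecm_mat zero_vec_def)
  moreover have "H *\<^sub>v 0\<^sub>v (n*n) = \<kappa> \<cdot>\<^sub>v 0\<^sub>v (n*n)"
    using H by (intro eq_vecI) (auto simp: scalar_prod_def)
  ultimately show ?case by simp
next
  case (Suc m)
  define A where "A = vecm (mat n n (\<lambda>(i,j). u 0 $ i * (\<Sum>k=1..m. \<beta> k * u k $ j) + (\<Sum>k=1..m. \<beta> k * u k $ i) * u 0 $ j))"
  define B where "B = vecm (mat n n (\<lambda>(i,j). u 0 $ i * u (Suc m) $ j + u (Suc m) $ i * u 0 $ j))"
  have A: "A \<in> carrier_vec (n*n)" and B: "B \<in> carrier_vec (n*n)" unfolding A_def B_def by (auto simp: vecm_mat)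
  have e: "vecm (mat n n (\<lambda>(i,j). u 0 $ i * (\<Sum>k=1..Suc m. \<beta> k * u k $ j) + (\<Sum>k=1..Suc m. \<beta> k * u k $ i) * u 0 $ j))
     = A + \<beta> (Suc m) \<cdot>\<^sub>v B"
    unfolding A_def B_def vecm_mat by (intro eq_vecI) (auto simp: algebra_simps)
  have IH: "H *\<^sub>v A = \<kappa> \<cdot>\<^sub>v A" using Suc unfolding A_def by simp
  have EB: "H *\<^sub>v B = \<kappa> \<cdot>\<^sub>v B" using Suc eig[of "Suc m"] unfolding B_def by simp
  have "H *\<^sub>v (A + \<beta> (Suc m) \<cdot>\<^sub>v B) = H *\<^sub>v A + \<beta> (Suc m) \<cdot>\<^sub>v (H *\<^sub>v B)"
    using H A B by (simp add: mult_add_distrib_mat_vec[of _ "n*n" "n*n"] mult_mat_vec[of _ "n*n" "n*n"])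
  also have "\<dots> = \<kappa> \<cdot>\<^sub>v (A + \<beta> (Suc m) \<cdot>\<^sub>v B)"
    unfolding IH EB using A B by (intro eq_vecI) (auto simp: algebra_simps)
  finally show ?case unfolding e .
qed

lemma psd_smult:
  assumes A: "psd A" and c: "0 \<le> (c::real)"
  shows "psd (c \<cdot>\<^sub>m A)"
proof -
  have Ac: "A \<in> carrier_mat (dim_row A) (dim_row A)" using A unfolding psd_def by blast
  have d: "dim_row (c \<cdot>\<^sub>m A) = dim_row A" by (rule index_smult_mat(2))
  have C1: "c \<cdot>\<^sub>m A \<in> carrier_mat (dim_row (c \<cdot>\<^sub>m A)) (dim_row (c \<cdot>\<^sub>m A))"
    unfolding d by (rule smult_carrier_mat[OF Ac])
  have C2: "0 \<le> x \<bullet> ((c \<cdot>\<^sub>m A) *\<^sub>v x)" if x: "x \<in> carrier_vec (dim_row (c \<cdot>\<^sub>m A))" for x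
  proof -
    have x': "x \<in> carrier_vec (dim_row A)" using x unfolding d .
    have "(c \<cdot>\<^sub>m A) *\<^sub>v x = c \<cdot>\<^sub>v (A *\<^sub>v x)" by (rule smult_mat_vec[OF Ac x'])
    then have "x \<bullet> ((c \<cdot>\<^sub>m A) *\<^sub>v x) = c * (x \<bullet> (A *\<^sub>v x))"
      using scalar_prod_smult_distrib[OF x' mult_mat_vec_carrier[OF Ac x']] by simp
    moreover have "0 \<le> x \<bullet> (A *\<^sub>v x)" using A x' unfolding psd_def by blast
    ultimately show ?thesis using c by simp
  qed
  show ?thesis unfolding psd_def using C1 C2 by blast
qed



theorem lemma26:
  fixes n r rs :: nat
    and u :: "nat \<Rightarrow> real vec"
    and H J X Z :: "real mat"
    and q :: nat and \<kappa> \<xi> \<delta> :: real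
  assumes rs_ge: "1 \<le> rs" and rs_le: "rs \<le> r" and r_lt: "r < n"
    and u_carrier: "\<And>i. i < n \<Longrightarrow> u i \<in> carrier_vec n"
    and u_orthonormal: "\<And>i j. i < n \<Longrightarrow> j < n \<Longrightarrow> u i \<bullet> u j = (if i = j then 1 else 0)"
    and q_def: "q = r - rs + 1"
    and kappa_def: "\<kappa> = 1 + 2 * sqrt (real q)"
    and H_carrier: "H \<in> carrier_mat (n*n) (n*n)"
    and H_sym: "transpose_mat H = H"
    and H_lower: "loewner_le (1\<^sub>m (n*n)) H"
    and H_upper: "loewner_le H (\<kappa> \<cdot>\<^sub>m 1\<^sub>m (n*n))"
    and H_eig1: "H *\<^sub>v vecm (mat n n (\<lambda>(i,j). sqrt (real q) * (u 0 $ i * u 0 $ j)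
                   + (\<Sum>k=1..q. u k $ i * u k $ j)))
               = \<kappa> \<cdot>\<^sub>v vecm (mat n n (\<lambda>(i,j). sqrt (real q) * (u 0 $ i * u 0 $ j)
                   + (\<Sum>k=1..q. u k $ i * u k $ j)))"
    and H_eig2: "H *\<^sub>v vecm (mat n n (\<lambda>(i,j). sqrt (real q) * (u 0 $ i * u 0 $ j)
                   - (\<Sum>k=1..q. u k $ i * u k $ j)))
               = vecm (mat n n (\<lambda>(i,j). sqrt (real q) * (u 0 $ i * u 0 $ j)
                   - (\<Sum>k=1..q. u k $ i * u k $ j)))"
    and H_eig3: "\<And>k. 1 \<le> k \<Longrightarrow> k \<le> r \<Longrightarrow>
               H *\<^sub>v vecm (mat n n (\<lambda>(i,j). u 0 $ i * u k $ j + u k $ i * u 0 $ j))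
               = \<kappa> \<cdot>\<^sub>v vecm (mat n n (\<lambda>(i,j). u 0 $ i * u k $ j + u k $ i * u 0 $ j))"
    and xi_def: "\<xi> = sqrt (1 + sqrt (real q))"
    and delta_def: "\<delta> = 1 / (1 + 1 / sqrt (real q))"
    and Z_def: "Z = mat n rs (\<lambda>(i,j). \<xi> * (if j = 0 then u 0 $ i else u (q + j) $ i))"
    and X_def: "X = mat n r (\<lambda>(i,j). (if j < q then 1 else \<xi>) * u (j + 1) $ i)"
    and J_carrier: "J \<in> carrier_mat (n*n) (n*r)"
    and J_prop: "\<And>Y. Y \<in> carrier_mat n r \<Longrightarrow>
               J *\<^sub>v vecm Y = vecm (X * transpose_mat Y + Y * transpose_mat X)"
  shows "transpose_mat J *\<^sub>v (((1 - \<delta>) \<cdot>\<^sub>m H) *\<^sub>v vecm (X * transpose_mat X - Z * transpose_mat Z))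
           = 0\<^sub>v (n*r)
       \<and> psd (kron (2 \<cdot>\<^sub>m 1\<^sub>m r)
                   (matv n n (((1 - \<delta>) \<cdot>\<^sub>m H) *\<^sub>v vecm (X * transpose_mat X - Z * transpose_mat Z)))
              + transpose_mat J * ((1 - \<delta>) \<cdot>\<^sub>m H) * J)
       \<and> loewner_le ((1 - \<delta>) \<cdot>\<^sub>m 1\<^sub>m (n*n)) ((1 - \<delta>) \<cdot>\<^sub>m H)
       \<and> loewner_le ((1 - \<delta>) \<cdot>\<^sub>m H) ((1 + \<delta>) \<cdot>\<^sub>m 1\<^sub>m (n*n))"

proof -
  define sq where "sq = sqrt (real q)"
  have q1: "1 \<le> q" using q_def rs_le by simp
  have qr: "q \<le> r" using q_def rs_ge rs_le by simp
  have qrs: "q + rs = r + 1" using q_def rs_ge rs_le by simp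
  have sq1: "1 \<le> sq" unfolding sq_def using q1 by simp
  have xi2: "\<xi>^2 = 1 + sq" unfolding xi_def sq_def by simp
  have xi1: "1 \<le> \<xi>" unfolding xi_def using sq1 sq_def by simp
  have kap: "\<kappa> = 1 + 2 * sq" using kappa_def sq_def by simp
  have dl: "1 - \<delta> = 1 / (1 + sq)" unfolding delta_def sq_def[symmetric] using sq1
    by (simp add: field_simps)
  have dl0: "0 < 1 - \<delta>" unfolding dl using sq1 by simp
  have dd: "\<delta> = sq / (1 + sq)" unfolding delta_def sq_def[symmetric] using sq1
    by (simp add: field_simps)
  have dl2: "1 + \<delta> = (1 - \<delta>) * \<kappa>" unfolding kap dd using sq1 by (simp add: field_simps)
  have n0: "0 < n" using r_lt by simp
  have uc: "\<And>k. k \<le> r \<Longrightarrow> u k \<in> carrier_vec n" using u_carrier r_lt by simp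
  have Xc: "X \<in> carrier_mat n r" unfolding X_def by simp
  have Zc: "Z \<in> carrier_mat n rs" unfolding Z_def by simp
  have XX: "X * transpose_mat X - Z * transpose_mat Z = mat n n (\<lambda>(i,j). (\<Sum>k=1..q. u k $ i * u k $ j) - \<xi>^2 * (u 0 $ i * u 0 $ j))"
    unfolding X_def Z_def
    apply (intro eq_matI)
    apply (simp_all add: scalar_prod_def)
    subgoal for i j using sumXZ[OF qrs rs_ge, of \<xi> "\<lambda>k. u k $ i" "\<lambda>k. u k $ j"] by simp
    done
  define e where "e = vecm (X * transpose_mat X - Z * transpose_mat Z)"
  define UU where "UU = vec (n*n) (\<lambda>t. u 0 $ (t mod n) * u 0 $ (t div n))"
  define vA where "vA = vecm (mat n n (\<lambda>(i,j). sqrt (real q) * (u 0 $ i * u 0 $ j)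
                   + (\<Sum>k=1..q. u k $ i * u k $ j)))"
  define vB where "vB = vecm (mat n n (\<lambda>(i,j). sqrt (real q) * (u 0 $ i * u 0 $ j)
                   - (\<Sum>k=1..q. u k $ i * u k $ j)))"
  have vAc: "vA \<in> carrier_vec (n*n)" and vBc: "vB \<in> carrier_vec (n*n)" and UUc: "UU \<in> carrier_vec (n*n)"
    unfolding vA_def vB_def UU_def by (auto simp: vecm_mat)
  have ec: "e \<in> carrier_vec (n*n)" unfolding e_def XX by (simp add: vecm_mat)
  define a where "a = - 1 / (2 * sq)"
  define b where "b = - 1 - 1 / (2 * sq)"
  have ecomb: "e = a \<cdot>\<^sub>v vA + b \<cdot>\<^sub>v vB"
  proof (intro eq_vecI)
    fix t assume "t < dim_vec (a \<cdot>\<^sub>v vA + b \<cdot>\<^sub>v vB)"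
    then have t: "t < n*n" using vAc vBc by simp
    show "e $ t = (a \<cdot>\<^sub>v vA + b \<cdot>\<^sub>v vB) $ t"
      unfolding e_def XX vA_def vB_def vecm_mat sq_def[symmetric] a_def b_def xi2 using t sq1
      by (simp add: field_simps)
  qed (use ec vAc vBc in auto)
  have He: "H *\<^sub>v e = (- \<kappa>) \<cdot>\<^sub>v UU"
  proof -
    have "H *\<^sub>v e = a \<cdot>\<^sub>v (H *\<^sub>v vA) + b \<cdot>\<^sub>v (H *\<^sub>v vB)"
      unfolding ecomb using H_carrier vAc vBc
      by (simp add: mult_add_distrib_mat_vec[of _ "n*n" "n*n"] mult_mat_vec[of _ "n*n" "n*n"])
    also have "\<dots> = a \<cdot>\<^sub>v (\<kappa> \<cdot>\<^sub>v vA) + b \<cdot>\<^sub>v vB"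
      using H_eig1 H_eig2 unfolding vA_def vB_def by simp
    also have "\<dots> = (- \<kappa>) \<cdot>\<^sub>v UU"
    proof (intro eq_vecI)
      fix t assume "t < dim_vec ((- \<kappa>) \<cdot>\<^sub>v UU)"
      then have t: "t < n*n" using UUc by simp
      show "(a \<cdot>\<^sub>v (\<kappa> \<cdot>\<^sub>v vA) + b \<cdot>\<^sub>v vB) $ t = ((- \<kappa>) \<cdot>\<^sub>v UU) $ t"
        unfolding UU_def vA_def vB_def vecm_mat sq_def[symmetric] a_def b_def kap using t sq1
        by (simp add: field_simps)
    qed (use UUc vAc vBc in auto)
    finally show ?thesis .
  qed
  define \<kappa>' where "\<kappa>' = (1 - \<delta>) * \<kappa>"
  have h: "((1 - \<delta>) \<cdot>\<^sub>m H) *\<^sub>v e = (- \<kappa>') \<cdot>\<^sub>v UU"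
    using smult_mat_vec[OF H_carrier ec] He unfolding \<kappa>'_def by (simp add: smult_smult_assoc)
  have u0c: "u 0 \<in> carrier_vec n" using uc by simp
  have udim: "\<And>k. k \<le> r \<Longrightarrow> dim_vec (u k) = n" using uc carrier_vecD by blast
  have XTy: "transpose_mat X *\<^sub>v y = vec r (\<lambda>c. (if c<q then 1 else \<xi>) * (u (Suc c) \<bullet> y))"
    if y: "y \<in> carrier_vec n" for y
  proof (intro eq_vecI)
    fix c assume "c < dim_vec (vec r (\<lambda>c. (if c<q then 1 else \<xi>) * (u (Suc c) \<bullet> y)))"
    then have c: "c < r" by simp
    then have "u (Suc c) \<in> carrier_vec n" using uc by simp
    then show "(transpose_mat X *\<^sub>v y) $ c = vec r (\<lambda>c. (if c<q then 1 else \<xi>) * (u (Suc c) \<bullet> y)) $ c"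
      using c y unfolding X_def by (simp add: scalar_prod_def sum_distrib_left mult.assoc)
  qed (simp add: X_def)
  have XTu0: "transpose_mat X *\<^sub>v u 0 = 0\<^sub>v r"
  proof -
    have "u (Suc c) \<bullet> u 0 = 0" if "c < r" for c using u_orthonormal[of "Suc c" 0] that r_lt by simp
    then show ?thesis unfolding XTy[OF u0c] by (intro eq_vecI) auto
  qed
  have SY: "(X * transpose_mat Y + Y * transpose_mat X) *\<^sub>v y = X *\<^sub>v (transpose_mat Y *\<^sub>v y) + Y *\<^sub>v (transpose_mat X *\<^sub>v y)"
    if Y: "Y \<in> carrier_mat n r" and y: "y \<in> carrier_vec n" for Y y
  proof -
    have "(X * transpose_mat Y + Y * transpose_mat X) *\<^sub>v y = (X * transpose_mat Y) *\<^sub>v y + (Y * transpose_mat X) *\<^sub>v y"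
      using Xc Y y by (intro add_mult_distrib_mat_vec[of _ n n]) auto
    also have "\<dots> = X *\<^sub>v (transpose_mat Y *\<^sub>v y) + Y *\<^sub>v (transpose_mat X *\<^sub>v y)"
      using Xc Y y by (simp add: assoc_mult_mat_vec[of _ n r _ n])
    finally show ?thesis .
  qed
  have u0X: "u 0 \<bullet> (X *\<^sub>v w) = 0" if w: "w \<in> carrier_vec r" for w
    using transpose_vec_mult_scalar[OF Xc w u0c] XTu0 w by simp
  have Y0: "Y *\<^sub>v 0\<^sub>v r = 0\<^sub>v n" if Y: "Y \<in> carrier_mat n r" for Y :: "real mat"
    using Y by (intro eq_vecI) (auto simp: scalar_prod_def)
  have Sq: "u 0 \<bullet> ((X * transpose_mat Y + Y * transpose_mat X) *\<^sub>v u 0) = 0"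
    if Y: "Y \<in> carrier_mat n r" for Y
  proof -
    have w: "transpose_mat Y *\<^sub>v u 0 \<in> carrier_vec r" using Y u0c by simp
    show ?thesis unfolding SY[OF Y u0c] XTu0 Y0[OF Y]
      using u0X[OF w] Xc Y u0c w by (simp add: scalar_prod_add_distrib[of _ n])
  qed
  define hh where "hh = ((1 - \<delta>) \<cdot>\<^sub>m H) *\<^sub>v e"
  have hhc: "hh \<in> carrier_vec (n*n)" unfolding hh_def h using UUc by simp
  have hhS: "hh \<bullet> vecm (X * transpose_mat Y + Y * transpose_mat X) = 0" if Y: "Y \<in> carrier_mat n r" for Y
  proof -
    have Sc: "X * transpose_mat Y + Y * transpose_mat X \<in> carrier_mat n n" using Xc Y by simp
    have "hh \<bullet> vecm (X * transpose_mat Y + Y * transpose_mat X) = (- \<kappa>') * (UU \<bullet> vecm (X * transpose_mat Y + Y * transpose_mat X))"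
      unfolding hh_def h using UUc Sc by (simp add: smult_scalar_prod_distrib[of _ "n*n"])
    also have "UU = vecm (mat n n (\<lambda>(i,j). u 0 $ i * u 0 $ j))" unfolding UU_def vecm_mat by simp
    also have "vecm (mat n n (\<lambda>(i,j). u 0 $ i * u 0 $ j)) \<bullet> vecm (X * transpose_mat Y + Y * transpose_mat X) = 0"
      using bil1[OF u0c Sc] Sq[OF Y] by simp
    finally show ?thesis by simp
  qed
  have JS: "J *\<^sub>v z = vecm (X * transpose_mat (matv n r z) + matv n r z * transpose_mat X)"
    if z: "z \<in> carrier_vec (n*r)" for z
    using J_prop[OF matv_carrier[of n r z]] vecm_matv[OF z] by simp
  have part1: "transpose_mat J *\<^sub>v hh = 0\<^sub>v (n*r)"
  proof -
    define z where "z = transpose_mat J *\<^sub>v hh"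
    have zc: "z \<in> carrier_vec (n*r)" using J_carrier unfolding z_def carrier_vec_def carrier_mat_def by simp
    have "z \<bullet> z = hh \<bullet> (J *\<^sub>v z)"
      using transpose_vec_mult_scalar[OF J_carrier zc hhc, folded z_def] .
    also have "\<dots> = 0" unfolding JS[OF zc] by (rule hhS) simp
    finally have "z = 0\<^sub>v (n*r)" by (rule self_sp_zero[OF zc])
    then show ?thesis unfolding z_def .
  qed
  define H' where "H' = (1 - \<delta>) \<cdot>\<^sub>m H"
  have H'c: "H' \<in> carrier_mat (n*n) (n*n)" unfolding H'_def using H_carrier by simp
  define K where "K = kron (2 \<cdot>\<^sub>m 1\<^sub>m r) (matv n n hh)"
  have Mh: "matv n n hh = mat n n (\<lambda>(i,j). (- \<kappa>') * (u 0 $ i * u 0 $ j))"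
    unfolding matv_def hh_def h UU_def by (intro eq_matI) (auto simp: idx_lt)
  have Kc: "K \<in> carrier_mat (n*r) (n*r)" unfolding K_def kron_def matv_def by (simp add: mult.commute)
  have JHJc: "transpose_mat J * H' * J \<in> carrier_mat (n*r) (n*r)" using J_carrier H'c by simp
  have part2: "psd (K + transpose_mat J * H' * J)"
    unfolding psd_def
  proof (intro conjI ballI)
    show "K + transpose_mat J * H' * J \<in> carrier_mat (dim_row (K + transpose_mat J * H' * J)) (dim_row (K + transpose_mat J * H' * J))"
      using Kc JHJc J_carrier by (metis add_carrier_mat carrier_matD(1) index_add_mat(2))
    fix x :: "real vec" assume "x \<in> carrier_vec (dim_row (K + transpose_mat J * H' * J))"
    then have x: "x \<in> carrier_vec (n*r)" using JHJc J_carrier by simp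
    define Y where "Y = matv n r x"
    have Yc: "Y \<in> carrier_mat n r" unfolding Y_def by simp
    define S where "S = X * transpose_mat Y + Y * transpose_mat X"
    have Sc: "S \<in> carrier_mat n n" unfolding S_def using Xc Yc by simp
    define s where "s = J *\<^sub>v x"
    have s_eq: "s = vecm S" unfolding s_def S_def Y_def using JS[OF x] .
    have sc: "s \<in> carrier_vec (n*n)" unfolding s_eq using Sc by simp
    define w where "w = transpose_mat Y *\<^sub>v u 0"
    have wc: "w \<in> carrier_vec r" using Yc unfolding w_def carrier_vec_def carrier_mat_def by simp
    have w_eq: "w $ c = (\<Sum>i<n. u 0 $ i * x $ (i + c*n))" if c: "c < r" for c
      unfolding w_def Y_def matv_def using c u0c
      by (simp add: scalar_prod_def lessThan_atLeast0 mult.commute)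
    define W where "W = (\<Sum>c<r. (w $ c)^2)"
    have quadK: "x \<bullet> (K *\<^sub>v x) = 2 * (- \<kappa>') * W"
      unfolding K_def Mh W_def using kron_quad[OF u0c x, of "- \<kappa>'"] w_eq by simp
    have quadJ: "x \<bullet> ((transpose_mat J * H' * J) *\<^sub>v x) = (1 - \<delta>) * (s \<bullet> (H *\<^sub>v s))"
    proof -
      have Hs: "H *\<^sub>v s \<in> carrier_vec (n*n)" using H_carrier sc by simp
      have "(transpose_mat J * H' * J) *\<^sub>v x = transpose_mat J *\<^sub>v (H' *\<^sub>v s)"
        unfolding s_def using J_carrier H'c x
        by (simp add: assoc_mult_mat_vec[of _ "n*r" "n*n" _ "n*r"] assoc_mult_mat_vec[of _ "n*r" "n*n" _ "n*n"])
      moreover have "H' *\<^sub>v s = (1 - \<delta>) \<cdot>\<^sub>v (H *\<^sub>v s)"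
        unfolding H'_def using smult_mat_vec[OF H_carrier sc] .
      moreover have "x \<bullet> (transpose_mat J *\<^sub>v ((1 - \<delta>) \<cdot>\<^sub>v (H *\<^sub>v s))) = ((1 - \<delta>) \<cdot>\<^sub>v (H *\<^sub>v s)) \<bullet> s"
      proof -
        have y: "(1 - \<delta>) \<cdot>\<^sub>v (H *\<^sub>v s) \<in> carrier_vec (n*n)" using Hs by simp
        have "x \<bullet> (transpose_mat J *\<^sub>v ((1 - \<delta>) \<cdot>\<^sub>v (H *\<^sub>v s))) = (transpose_mat J *\<^sub>v ((1 - \<delta>) \<cdot>\<^sub>v (H *\<^sub>v s))) \<bullet> x"
        proof -
          have "transpose_mat J *\<^sub>v ((1 - \<delta>) \<cdot>\<^sub>v (H *\<^sub>v s)) \<in> carrier_vec (n*r)"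
            using J_carrier unfolding carrier_vec_def carrier_mat_def by simp
          then show ?thesis using comm_scalar_prod[OF x] by blast
        qed
        also have "\<dots> = ((1 - \<delta>) \<cdot>\<^sub>v (H *\<^sub>v s)) \<bullet> s"
          using transpose_vec_mult_scalar[OF J_carrier x y] unfolding s_def[symmetric] .
        finally show ?thesis .
      qed
      moreover have "((1 - \<delta>) \<cdot>\<^sub>v (H *\<^sub>v s)) \<bullet> s = (1 - \<delta>) * (s \<bullet> (H *\<^sub>v s))"
        using Hs sc comm_scalar_prod[OF Hs sc] by simp
      ultimately show ?thesis by simp
    qed
    have key: "2 * \<kappa> * W \<le> s \<bullet> (H *\<^sub>v s)"
    proof -
      define c where "c j = (if j < q then 1 else \<xi>)" for j
      define \<beta> where "\<beta> k = c (k - 1) * w $ (k - 1)" for k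
      define v where "v = vec n (\<lambda>i. \<Sum>k=1..r. \<beta> k * u k $ i)"
      have vc: "v \<in> carrier_vec n" unfolding v_def by (rule vec_carrier)
      define p where "p = vecm (mat n n (\<lambda>(i,j). u 0 $ i * v $ j + v $ i * u 0 $ j))"
      have pc: "p \<in> carrier_vec (n*n)" unfolding p_def by (simp add: vecm_mat)
      have p_eq: "p = vecm (mat n n (\<lambda>(i,j). u 0 $ i * (\<Sum>k=1..r. \<beta> k * u k $ j) + (\<Sum>k=1..r. \<beta> k * u k $ i) * u 0 $ j))"
        unfolding p_def by (intro arg_cong[where f=vecm] eq_matI) (simp_all add: v_def)
      have Hp: "H *\<^sub>v p = \<kappa> \<cdot>\<^sub>v p"
        unfolding p_eq using eig_sum[where u=u and n=n and r=r and \<kappa>=\<kappa> and H=H and m=r and \<beta>=\<beta>, OF H_carrier H_eig3] by simp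
      have ki: "2 * \<kappa> * (s \<bullet> p) - \<kappa> * (p \<bullet> p) \<le> s \<bullet> (H *\<^sub>v s)"
        by (rule keyineq[OF H_carrier H_sym H_lower sc pc Hp])
      have uv: "u j \<bullet> v = (if 1 \<le> j \<and> j \<le> r then \<beta> j else 0)" if j: "j < n" for j
      proof -
        have "u j \<bullet> v = (\<Sum>i\<in>{0..<n}. u j $ i * (\<Sum>k=1..r. \<beta> k * u k $ i))"
          unfolding scalar_prod_def v_def by simp
        also have "\<dots> = (\<Sum>k=1..r. \<Sum>i\<in>{0..<n}. \<beta> k * (u j $ i * u k $ i))"
          by (simp add: sum_distrib_left sum.swap[of _ "{0..<n}"] algebra_simps)
        also have "\<dots> = (\<Sum>k=1..r. \<beta> k * (u j \<bullet> u k))"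
          using u_carrier[OF j] udim by (intro sum.cong refl) (simp add: scalar_prod_def sum_distrib_left)
        also have "\<dots> = (\<Sum>k=1..r. (if j = k then \<beta> k else 0))"
          using j r_lt by (intro sum.cong refl) (simp add: u_orthonormal)
        also have "\<dots> = (if 1 \<le> j \<and> j \<le> r then \<beta> j else 0)" by simp
        finally show ?thesis .
      qed
      have XTv: "transpose_mat X *\<^sub>v v = vec r (\<lambda>j. c j * c j * w $ j)"
        unfolding XTy[OF vc] using r_lt uv by (intro eq_vecI) (auto simp: c_def \<beta>_def)
      have XTvc: "transpose_mat X *\<^sub>v v \<in> carrier_vec r" unfolding XTv by simp
      define T where "T = (\<Sum>j<r. c j * c j * (w $ j)^2)"
      have XTvw: "(transpose_mat X *\<^sub>v v) \<bullet> w = T"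
        unfolding XTv T_def using wc by (simp add: scalar_prod_def lessThan_atLeast0 power2_eq_square mult.assoc)
      have A1: "u 0 \<bullet> (S *\<^sub>v v) = w \<bullet> (transpose_mat X *\<^sub>v v)"
      proof -
        have Ytv: "transpose_mat Y *\<^sub>v v \<in> carrier_vec r"
          using Yc unfolding carrier_vec_def carrier_mat_def by simp
        have B1: "u 0 \<bullet> (S *\<^sub>v v) = u 0 \<bullet> (X *\<^sub>v (transpose_mat Y *\<^sub>v v)) + u 0 \<bullet> (Y *\<^sub>v (transpose_mat X *\<^sub>v v))"
          unfolding S_def SY[OF Yc vc] using Xc Yc Ytv XTvc u0c
          by (intro scalar_prod_add_distrib[of _ n]) auto
        have B2: "u 0 \<bullet> (X *\<^sub>v (transpose_mat Y *\<^sub>v v)) = 0" by (rule u0X[OF Ytv])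
        have B3: "u 0 \<bullet> (Y *\<^sub>v (transpose_mat X *\<^sub>v v)) = w \<bullet> (transpose_mat X *\<^sub>v v)"
          unfolding w_def using transpose_vec_mult_scalar[OF Yc XTvc u0c] by simp
        show ?thesis using B1 B2 B3 by linarith
      qed
      have A2: "v \<bullet> (S *\<^sub>v u 0) = (transpose_mat X *\<^sub>v v) \<bullet> w"
      proof -
        have "S *\<^sub>v u 0 = X *\<^sub>v w"
          unfolding S_def SY[OF Yc u0c] XTu0 Y0[OF Yc] w_def[symmetric]
          by (rule right_zero_vec[OF mult_mat_vec_carrier[OF Xc wc]])
        then show ?thesis using transpose_vec_mult_scalar[OF Xc wc vc] by simp
      qed
      have A3: "w \<bullet> (transpose_mat X *\<^sub>v v) = (transpose_mat X *\<^sub>v v) \<bullet> w"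
        using comm_scalar_prod[OF wc XTvc] .
      have A4: "s \<bullet> p = p \<bullet> s" using comm_scalar_prod[OF sc pc] .
      have A5: "p \<bullet> s = u 0 \<bullet> (S *\<^sub>v v) + v \<bullet> (S *\<^sub>v u 0)"
        unfolding p_def s_eq using bil[OF u0c vc Sc] .
      have sp: "s \<bullet> p = 2 * T" using A1 A2 A3 A4 A5 XTvw by linarith
      have vv: "v \<bullet> v = T"
      proof -
        have "(\<Sum>k=1..r. \<beta> k * (u k \<bullet> v)) = (\<Sum>k=1..r. \<Sum>i\<in>{0..<n}. \<beta> k * u k $ i * v $ i)"
          using vc by (simp add: scalar_prod_def sum_distrib_left mult.assoc)
        also have "\<dots> = (\<Sum>i\<in>{0..<n}. \<Sum>k=1..r. \<beta> k * u k $ i * v $ i)" by (rule sum.swap)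
        also have "\<dots> = (\<Sum>i\<in>{0..<n}. v $ i * v $ i)"
          by (intro sum.cong refl) (simp add: v_def sum_distrib_right mult.commute)
        also have "\<dots> = v \<bullet> v" using vc by (simp add: scalar_prod_def)
        finally have "v \<bullet> v = (\<Sum>k=1..r. \<beta> k * (u k \<bullet> v))" by simp
        also have "\<dots> = (\<Sum>k=1..r. \<beta> k * \<beta> k)"
          using r_lt by (intro sum.cong refl) (simp add: uv)
        also have "\<dots> = (\<Sum>j<r. \<beta> (Suc j) * \<beta> (Suc j))" using sum.atLeast1_atMost_eq[of "\<lambda>k. \<beta> k * \<beta> k" r] by simp
        also have "\<dots> = T" unfolding T_def \<beta>_def by (simp add: power2_eq_square algebra_simps)
        finally show ?thesis .
      qed
      have pp: "p \<bullet> p = 2 * T"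
      proof -
        have "u 0 \<bullet> u 0 = 1" using u_orthonormal n0 by simp
        moreover have "u 0 \<bullet> v = 0" using uv n0 by simp
        ultimately show ?thesis unfolding p_def using pnorm[OF u0c vc] vv by simp
      qed
      have TW: "W \<le> T"
        unfolding W_def T_def
      proof (intro sum_mono)
        fix j assume "j \<in> {..<r}"
        have "1 \<le> c j * c j" unfolding c_def using xi1 mult_mono[OF xi1 xi1] by simp
        then show "(w $ j)^2 \<le> c j * c j * (w $ j)^2"
          using mult_right_mono[of 1 "c j * c j" "(w $ j)^2"] by simp
      qed
      have k0: "0 \<le> \<kappa>" using kap sq1 by simp
      have "2 * \<kappa> * W \<le> 2 * \<kappa> * T" using mult_left_mono[OF TW k0] by simp
      also have "\<dots> = 2 * \<kappa> * (s \<bullet> p) - \<kappa> * (p \<bullet> p)" unfolding sp pp by simp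
      finally show ?thesis using ki by simp
    qed
    have "x \<bullet> ((K + transpose_mat J * H' * J) *\<^sub>v x) = x \<bullet> (K *\<^sub>v x) + x \<bullet> ((transpose_mat J * H' * J) *\<^sub>v x)"
      using Kc JHJc x by (simp add: add_mult_distrib_mat_vec[of _ "n*r" "n*r"] scalar_prod_add_distrib[of _ "n*r"])
    also have "\<dots> = (1 - \<delta>) * (s \<bullet> (H *\<^sub>v s) - 2 * \<kappa> * W)"
      unfolding quadK quadJ \<kappa>'_def by (simp add: algebra_simps)
    finally show "0 \<le> x \<bullet> ((K + transpose_mat J * H' * J) *\<^sub>v x)"
      using key dl0 by simp
  qed
  have part3: "loewner_le ((1 - \<delta>) \<cdot>\<^sub>m 1\<^sub>m (n*n)) ((1 - \<delta>) \<cdot>\<^sub>m H)"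
  proof -
    have "(1 - \<delta>) \<cdot>\<^sub>m H - (1 - \<delta>) \<cdot>\<^sub>m 1\<^sub>m (n*n) = (1 - \<delta>) \<cdot>\<^sub>m (H - 1\<^sub>m (n*n))"
      using H_carrier by (intro eq_matI) (auto simp: algebra_simps)
    moreover have "psd (H - 1\<^sub>m (n*n))" using H_lower unfolding loewner_le_def .
    ultimately show ?thesis unfolding loewner_le_def using psd_smult dl0 by simp
  qed
  have part4: "loewner_le ((1 - \<delta>) \<cdot>\<^sub>m H) ((1 + \<delta>) \<cdot>\<^sub>m 1\<^sub>m (n*n))"
  proof -
    have "(1 + \<delta>) \<cdot>\<^sub>m 1\<^sub>m (n*n) - (1 - \<delta>) \<cdot>\<^sub>m H = (1 - \<delta>) \<cdot>\<^sub>m (\<kappa> \<cdot>\<^sub>m 1\<^sub>m (n*n) - H)"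
      using H_carrier unfolding dl2 by (intro eq_matI) (auto simp: algebra_simps)
    moreover have "psd (\<kappa> \<cdot>\<^sub>m 1\<^sub>m (n*n) - H)" using H_upper unfolding loewner_le_def .
    ultimately show ?thesis unfolding loewner_le_def using psd_smult dl0 by simp
  qed
  show ?thesis
    unfolding e_def[symmetric]
    unfolding hh_def[symmetric]
    unfolding H'_def[symmetric] K_def[symmetric]
    using part1 part2 part3 part4 by (simp only: H'_def)
qed

end
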